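(* Consider a one-site PTM cascade with $n=1$ layer, with rate constants and $\overline{E},\overline{F}>0$ fixed, and let $T=c^1\overline{F}-c^0\overline{E}$. Consider the BMSS values of $S^1$ and $S^0$ as functions of $\overline{S}\in(0,\infty)$. Then both are strictly increasing in $\overline{S}$, and as $\overline{S}\to+\infty$: (i) if $T<0$, then $S^1\to+\infty$ and $S^0\to-\lambda\overline{F}/\Delta\in(0,\infty)$; (ii) if $T>0$, then $S^1\to\overline{E}/\Delta$ and $S^0\to+\infty$; (iii) if $T=0$, then both $S^1\to+\infty$ and $S^0\to+\infty$; where $\Delta=\gamma\overline{F}-\delta\overline{E}=(\delta/c^0)T$.
   Context: For $n=1$ the one-site PTM cascade has species $E,S^0,S^1,F,Y^0,Y^1$ with reactions $E+S^0\rightleftharpoons Y^0\to E+S^1$ (rate constants $a^0$ forward, $b^0$ backward, $c^0$ catalytic) and $F+S^1\rightleftharpoons Y^1\to F+S^0$ (rate constants $a^1,b^1,c^1$), all positive, mass-action kinetics. Put $\delta=a^1/(b^1+c^1)$, $\gamma=(c^1/c^0)\delta$, $\lambda=\frac{b^0+c^0}{a^0}\gamma$. A steady state for total amounts $\overline{E},\overline{F},\overline{S}$ is a real solution of $Y^0=\gamma FS^1$, $Y^1=\delta FS^1$, $\lambda FS^1=S^0E$, $\overline{F}=F+Y^1$, $\overline{E}=E+Y^0$, $\overline{S}=S^0+S^1+Y^0+Y^1$. A BMSS is a steady state with positive total amounts and all concentrations nonnegative; for positive total amounts it exists and is unique. *)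

theory Defs
  imports Complex_Main
begin

text \<open>One-site PTM cascade (n = 1). Rate constants a0 b0 c0 (for E + S0 <-> Y0 -> E + S1)
  and a1 b1 c1 (for F + S1 <-> Y1 -> F + S0).\<close>

definition ptm_delta :: "real \<Rightarrow> real \<Rightarrow> real \<Rightarrow> real" where
  "ptm_delta a1 b1 c1 = a1 / (b1 + c1)"

definition ptm_gamma :: "real \<Rightarrow> real \<Rightarrow> real \<Rightarrow> real \<Rightarrow> real" where
  "ptm_gamma c0 a1 b1 c1 = (c1 / c0) * ptm_delta a1 b1 c1"

definition ptm_lambda :: "real \<Rightarrow> real \<Rightarrow> real \<Rightarrow> real \<Rightarrow> real \<Rightarrow> real \<Rightarrow> real" where
  "ptm_lambda a0 b0 c0 a1 b1 c1 = ((b0 + c0) / a0) * ptm_gamma c0 a1 b1 c1"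

definition ptm_steady_state ::
  "real \<Rightarrow> real \<Rightarrow> real \<Rightarrow> real \<Rightarrow> real \<Rightarrow> real \<Rightarrow> real \<Rightarrow> real \<Rightarrow> real \<Rightarrow>
   real \<Rightarrow> real \<Rightarrow> real \<Rightarrow> real \<Rightarrow> real \<Rightarrow> real \<Rightarrow> bool" where
  "ptm_steady_state a0 b0 c0 a1 b1 c1 Eb Fb Sb E S0 S1 F Y0 Y1 \<longleftrightarrow>
     Y0 = ptm_gamma c0 a1 b1 c1 * F * S1 \<and>
     Y1 = ptm_delta a1 b1 c1 * F * S1 \<and>
     ptm_lambda a0 b0 c0 a1 b1 c1 * F * S1 = S0 * E \<and>
     Fb = F + Y1 \<and> Eb = E + Y0 \<and> Sb = S0 + S1 + Y0 + Y1"

definition ptm_BMSS ::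
  "real \<Rightarrow> real \<Rightarrow> real \<Rightarrow> real \<Rightarrow> real \<Rightarrow> real \<Rightarrow> real \<Rightarrow> real \<Rightarrow> real \<Rightarrow>
   real \<Rightarrow> real \<Rightarrow> real \<Rightarrow> real \<Rightarrow> real \<Rightarrow> real \<Rightarrow> bool" where
  "ptm_BMSS a0 b0 c0 a1 b1 c1 Eb Fb Sb E S0 S1 F Y0 Y1 \<longleftrightarrow>
     Eb > 0 \<and> Fb > 0 \<and> Sb > 0 \<and>
     ptm_steady_state a0 b0 c0 a1 b1 c1 Eb Fb Sb E S0 S1 F Y0 Y1 \<and>
     E \<ge> 0 \<and> S0 \<ge> 0 \<and> S1 \<ge> 0 \<and> F \<ge> 0 \<and> Y0 \<ge> 0 \<and> Y1 \<ge> 0"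

text \<open>The BMSS values of S1 and S0 (the BMSS is unique for positive totals).\<close>
definition bmss_S1 :: "real \<Rightarrow> real \<Rightarrow> real \<Rightarrow> real \<Rightarrow> real \<Rightarrow> real \<Rightarrow> real \<Rightarrow> real \<Rightarrow> real \<Rightarrow> real" where
  "bmss_S1 a0 b0 c0 a1 b1 c1 Eb Fb Sb =
     (THE S1. \<exists>E S0 F Y0 Y1. ptm_BMSS a0 b0 c0 a1 b1 c1 Eb Fb Sb E S0 S1 F Y0 Y1)"

definition bmss_S0 :: "real \<Rightarrow> real \<Rightarrow> real \<Rightarrow> real \<Rightarrow> real \<Rightarrow> real \<Rightarrow> real \<Rightarrow> real \<Rightarrow> real \<Rightarrow> real" where
  "bmss_S0 a0 b0 c0 a1 b1 c1 Eb Fb Sb =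
     (THE S0. \<exists>E S1 F Y0 Y1. ptm_BMSS a0 b0 c0 a1 b1 c1 Eb Fb Sb E S0 S1 F Y0 Y1)"

end

theory Submission
  imports Defs
begin

definition hfun :: "real \<Rightarrow> real \<Rightarrow> real \<Rightarrow> real \<Rightarrow> real \<Rightarrow> real \<Rightarrow> real" where
  "hfun d g l Eb Fb x = l*Fb*x/(Eb - (g*Fb - d*Eb)*x)"
definition gfun :: "real \<Rightarrow> real \<Rightarrow> real \<Rightarrow> real \<Rightarrow> real \<Rightarrow> real \<Rightarrow> real" where
  "gfun d g l Eb Fb x = hfun d g l Eb Fb x + x + (g+d)*Fb*x/(1+d*x)"

context
  fixes d g l Eb Fb :: real
  assumes d: "d > 0" and g: "g > 0" and l: "l > 0" and Eb: "Eb > 0" and Fb: "Fb > 0"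
begin

lemma hmono:
  assumes "0 \<le> x" "x < y" "(g*Fb - d*Eb)*y < Eb"
  shows "hfun d g l Eb Fb x < hfun d g l Eb Fb y"
proof -
  define D where "D = g*Fb - d*Eb"
  have y: "Eb - D*y > 0" using assms D_def by simp
  have x: "Eb - D*x > 0"
  proof (cases "D \<ge> 0")
    case True then have "D*x \<le> D*y" using assms by (simp add: mult_left_mono)
    then show ?thesis using y by simp
  next
    case False then have "D*x \<le> 0" using assms by (simp add: mult_nonpos_nonneg)
    then show ?thesis using Eb by simp
  qed
  have "l*Fb*x*(Eb - D*y) < l*Fb*y*(Eb - D*x)"
  proof -
    have "l*Fb*x*(Eb - D*y) = l*Fb*(x*Eb) - l*Fb*D*x*y" by (simp add: algebra_simps)
    moreover have "l*Fb*y*(Eb - D*x) = l*Fb*(y*Eb) - l*Fb*D*x*y" by (simp add: algebra_simps)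
    moreover have "l*Fb*(x*Eb) < l*Fb*(y*Eb)" using assms Eb l Fb by simp
    ultimately show ?thesis by simp
  qed
  then show ?thesis unfolding hfun_def D_def[symmetric] using x y
    by (simp add: divide_simps)
qed

lemma gmono:
  assumes "0 \<le> x" "x < y" "(g*Fb - d*Eb)*y < Eb"
  shows "gfun d g l Eb Fb x < gfun d g l Eb Fb y"
proof -
  have "x/(1+d*x) \<le> y/(1+d*y)"
  proof -
    have "x*(1+d*y) \<le> y*(1+d*x)" using assms by (simp add: algebra_simps)
    moreover have "1+d*x > 0" "1+d*y>0" using assms d by (smt (verit) mult_nonneg_nonneg)+
    ultimately show ?thesis by (simp add: field_simps)
  qed
  then have "(g+d)*Fb*x/(1+d*x) \<le> (g+d)*Fb*y/(1+d*y)"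
    using g d Fb by (metis mult_left_mono times_divide_eq_right less_eq_real_def add_pos_pos mult_pos_pos)
  then show ?thesis unfolding gfun_def using hmono[OF assms] assms by simp
qed

lemma gcont:
  assumes "0 \<le> x" "(g*Fb - d*Eb)*x < Eb"
  shows "isCont (gfun d g l Eb Fb) x"
proof -
  have "1 + d*x \<noteq> 0" using assms d by (smt (verit) mult_nonneg_nonneg)
  moreover have "Eb - (g*Fb - d*Eb)*x \<noteq> 0" using assms by simp
  ultimately show ?thesis unfolding gfun_def[abs_def] hfun_def
    by (intro continuous_intros) auto
qed

lemma gge: "0 \<le> x \<Longrightarrow> (g*Fb - d*Eb)*x < Eb \<Longrightarrow> gfun d g l Eb Fb x \<ge> x \<and> hfun d g l Eb Fb x \<ge> 0"
  unfolding gfun_def hfun_def using d g l Fb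
  by (auto intro!: add_nonneg_nonneg divide_nonneg_pos mult_nonneg_nonneg divide_nonneg_nonneg)

lemma gexists:
  assumes "Sb > 0"
  shows "\<exists>x. 0 \<le> x \<and> (g*Fb - d*Eb)*x < Eb \<and> gfun d g l Eb Fb x = Sb"
proof -
  define D where "D = g*Fb - d*Eb"
  obtain X where X: "0 \<le> X" "D*X < Eb" "gfun d g l Eb Fb X \<ge> Sb"
  proof (cases "D \<le> 0")
    case True
    have "D*Sb \<le> 0" using True assms by (simp add: mult_nonpos_nonneg)
    then show ?thesis using that[of Sb] gge[of Sb] assms Eb D_def by auto
  next
    case False
    define X where "X = Sb*Eb/(l*Fb + Sb*D)"
    have den: "l*Fb + Sb*D > 0" using False assms l Fb by (smt (verit) mult_pos_pos)
    have X0: "X \<ge> 0" unfolding X_def using den assms Eb by simp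
    have "D*X = (Sb*D)*Eb/(l*Fb+Sb*D)" unfolding X_def by simp
    also have "\<dots> < Eb" using den Eb l Fb by (simp add: divide_simps)
    finally have DX: "D*X < Eb" .
    have "hfun d g l Eb Fb X = Sb"
    proof -
      have "Eb - D*X = Eb*(l*Fb)/(l*Fb+Sb*D)" unfolding X_def using den by (simp add: field_simps)
      then have "hfun d g l Eb Fb X = l*Fb*X/(Eb*(l*Fb)/(l*Fb+Sb*D))"
        unfolding hfun_def D_def by simp
      also have "\<dots> = X*(l*Fb+Sb*D)/Eb" using den Eb l Fb by (simp add: field_simps)
      also have "X*(l*Fb+Sb*D) = Sb*Eb" unfolding X_def using den by simp
      finally show ?thesis using Eb by simp

    qed
    then have "gfun d g l Eb Fb X \<ge> Sb" unfolding gfun_def using X0 g d Fb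
      by (simp add: divide_nonneg_pos)
    then show ?thesis using that X0 DX by auto
  qed
  have cont: "\<forall>x. 0 \<le> x \<and> x \<le> X \<longrightarrow> isCont (gfun d g l Eb Fb) x"
  proof (intro allI impI)
    fix x assume x: "0 \<le> x \<and> x \<le> X"
    have "D*x < Eb"
    proof (cases "D \<ge> 0")
      case True then have "D*x \<le> D*X" using x by (simp add: mult_left_mono)
      then show ?thesis using X by simp
    next
      case False then have "D*x \<le> 0" using x by (simp add: mult_nonpos_nonneg)
      then show ?thesis using Eb by simp
    qed
    then show "isCont (gfun d g l Eb Fb) x" using gcont x D_def by auto
  qed
  have "gfun d g l Eb Fb 0 = 0" unfolding gfun_def hfun_def by simp
  then obtain x where x: "0 \<le> x" "x \<le> X" "gfun d g l Eb Fb x = Sb"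
    using IVT[of "gfun d g l Eb Fb" 0 Sb X] X cont assms by auto
  have "D*x < Eb"
  proof (cases "D \<ge> 0")
    case True then have "D*x \<le> D*X" using x by (simp add: mult_left_mono)
    then show ?thesis using X by simp
  next
    case False then have "D*x \<le> 0" using x by (simp add: mult_nonpos_nonneg)
    then show ?thesis using Eb by simp
  qed
  then show ?thesis using x D_def by auto
qed

lemma ginj:
  assumes "0 \<le> x" "(g*Fb - d*Eb)*x < Eb" "0 \<le> y" "(g*Fb - d*Eb)*y < Eb"
    "gfun d g l Eb Fb x = gfun d g l Eb Fb y"
  shows "x = y"
proof (rule ccontr)
  assume "x \<noteq> y"
  then consider "x < y" | "y < x" by linarith
  then show False
  proof cases
    case 1 then show ?thesis using gmono[of x y] assms by simp
  next
    case 2 then show ?thesis using gmono[of y x] assms by simp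
  qed
qed

lemma gbound: "0 \<le> x \<Longrightarrow> (g+d)*Fb*x/(1+d*x) \<le> (g+d)*Fb/d"
proof -
  assume x: "0 \<le> x"
  have p: "1 + d*x > 0" using x d by (smt (verit) mult_nonneg_nonneg)
  have "x/(1+d*x) \<le> 1/d" using p d by (simp add: field_simps)
  then have "(g+d)*Fb*(x/(1+d*x)) \<le> (g+d)*Fb*(1/d)"
    using g d Fb by (intro mult_left_mono) auto
  then show ?thesis by simp
qed

end

lemma params_pos:
  assumes "a0 > 0" "b0 > 0" "c0 > 0" "a1 > 0" "b1 > 0" "c1 > 0"
  shows "ptm_delta a1 b1 c1 > 0 \<and> ptm_gamma c0 a1 b1 c1 > 0 \<and> ptm_lambda a0 b0 c0 a1 b1 c1 > 0"
  using assms unfolding ptm_delta_def ptm_gamma_def ptm_lambda_def by simp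

lemma bmss_char:
  assumes "Eb > 0" "Fb > 0" "d > 0" "g > 0" "l > 0"
    and "d = ptm_delta a1 b1 c1" "g = ptm_gamma c0 a1 b1 c1" "l = ptm_lambda a0 b0 c0 a1 b1 c1"
    and B: "ptm_BMSS a0 b0 c0 a1 b1 c1 Eb Fb Sb E S0 S1 F Y0 Y1"
  shows "0 \<le> S1 \<and> (g*Fb - d*Eb)*S1 < Eb \<and> gfun d g l Eb Fb S1 = Sb \<and> S0 = hfun d g l Eb Fb S1"
proof -
  define D where "D = g*Fb - d*Eb"
  have Y0: "Y0 = g*F*S1" and Y1: "Y1 = d*F*S1" and L: "l*F*S1 = S0*E" and FF: "Fb = F + Y1"
    and EE: "Eb = E + Y0" and SS: "Sb = S0 + S1 + Y0 + Y1"
    and nn: "E \<ge> 0" "S0 \<ge> 0" "S1 \<ge> 0" "F \<ge> 0"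
    using B assms(6-8) unfolding ptm_BMSS_def ptm_steady_state_def by auto
  have p: "1 + d*S1 > 0" using nn assms by (smt (verit) mult_nonneg_nonneg)
  have Fb1: "Fb = F*(1+d*S1)" using FF Y1 by (simp add: algebra_simps)
  have Fe: "F = Fb/(1+d*S1)" using Fb1 p by (simp add: field_simps)
  have Fpos: "F > 0" using Fe p assms by simp
  have Ee: "E*(1+d*S1) = Eb - D*S1"
  proof -
    have "E*(1+d*S1) = (Eb - g*F*S1)*(1+d*S1)" using EE Y0 by simp
    also have "\<dots> = Eb + Eb*d*S1 - g*S1*(F*(1+d*S1))" by (simp add: algebra_simps)
    also have "\<dots> = Eb - D*S1" unfolding D_def Fb1 by (simp add: algebra_simps)
    finally show ?thesis .
  qed
  have Epos: "E > 0"
  proof (rule ccontr)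
    assume "\<not> E > 0"
    then have "E = 0" using nn by simp
    then have "l*F*S1 = 0" using L by simp
    then have "S1 = 0" using Fpos assms by simp
    then show False using Ee \<open>E = 0\<close> assms by simp
  qed
  have DS: "Eb - D*S1 > 0" using Ee[symmetric] Epos p by simp
  have S0e: "S0 = l*F*S1/E" using L Epos by (simp add: field_simps)
  have h: "hfun d g l Eb Fb S1 = S0"
  proof -
    have "hfun d g l Eb Fb S1 = l*(F*(1+d*S1))*S1/(E*(1+d*S1))"
      unfolding hfun_def D_def[symmetric] using Fb1 Ee by simp
    also have "\<dots> = l*F*S1/E" using p by simp
    finally show ?thesis using S0e by simp
  qed
  have q: "(g+d)*Fb*S1/(1+d*S1) = Y0 + Y1" using Fb1 p Y0 Y1 by (simp add: field_simps)
  have "gfun d g l Eb Fb S1 = Sb" unfolding gfun_def h q SS by simp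
  then show ?thesis using h nn DS D_def by auto
qed

lemma bmss_conv:
  assumes "Eb > 0" "Fb > 0" "d > 0" "g > 0" "l > 0"
    and "d = ptm_delta a1 b1 c1" "g = ptm_gamma c0 a1 b1 c1" "l = ptm_lambda a0 b0 c0 a1 b1 c1"
    and x: "0 \<le> x" "(g*Fb - d*Eb)*x < Eb" "gfun d g l Eb Fb x = Sb" "Sb > 0"
  shows "ptm_BMSS a0 b0 c0 a1 b1 c1 Eb Fb Sb (Eb - g*(Fb/(1+d*x))*x) (hfun d g l Eb Fb x) x
     (Fb/(1+d*x)) (g*(Fb/(1+d*x))*x) (d*(Fb/(1+d*x))*x)"
proof -
  define D where "D = g*Fb - d*Eb"
  define F where "F = Fb/(1+d*x)"
  define E where "E = Eb - g*F*x"
  have p: "1 + d*x > 0" using x assms by (smt (verit) mult_nonneg_nonneg)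
  have Fpos: "F > 0" unfolding F_def using p assms by simp
  have Fb1: "Fb = F*(1+d*x)" unfolding F_def using p by simp
  have Ee: "E*(1+d*x) = Eb - D*x"
  proof -
    have "E*(1+d*x) = Eb + Eb*d*x - g*x*(F*(1+d*x))" unfolding E_def by (simp add: algebra_simps)
    also have "\<dots> = Eb - D*x" unfolding D_def Fb1 by (simp add: algebra_simps)
    finally show ?thesis .
  qed
  have DS: "Eb - D*x > 0" using x D_def by simp
  have Epos: "E > 0" using Ee DS p by (smt (verit) mult_nonpos_nonneg)
  have h: "hfun d g l Eb Fb x = l*F*x/E"
  proof -
    have "hfun d g l Eb Fb x = l*(F*(1+d*x))*x/(E*(1+d*x))"
      unfolding hfun_def D_def[symmetric] using Fb1 Ee by simp
    also have "\<dots> = l*F*x/E" using p by simp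
    finally show ?thesis .
  qed
  have q: "(g+d)*Fb*x/(1+d*x) = g*F*x + d*F*x" using Fb1 p by (simp add: field_simps)
  have S: "Sb = hfun d g l Eb Fb x + x + g*F*x + d*F*x" using x(3) unfolding gfun_def q by simp
  have "l*F*x = hfun d g l Eb Fb x * E" using h Epos by simp
  moreover have "hfun d g l Eb Fb x \<ge> 0" using h Epos Fpos assms x by simp
  moreover have "g*F*x \<ge> 0" "d*F*x \<ge> 0" using Fpos x assms by simp_all
  ultimately show ?thesis unfolding ptm_BMSS_def ptm_steady_state_def F_def[symmetric] E_def[symmetric]
    using assms(1,2,6-8) x(1,4) Fpos Epos S Fb1 E_def by (auto simp: algebra_simps)
qed

lemma bmss_vals:
  assumes pos: "a0 > 0" "b0 > 0" "c0 > 0" "a1 > 0" "b1 > 0" "c1 > 0" "Eb > 0" "Fb > 0"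
    and dd: "d = ptm_delta a1 b1 c1" and gg: "g = ptm_gamma c0 a1 b1 c1"
    and ll: "l = ptm_lambda a0 b0 c0 a1 b1 c1"
    and x: "0 \<le> x" "(g*Fb - d*Eb)*x < Eb" "gfun d g l Eb Fb x = Sb" "Sb > 0"
  shows "bmss_S1 a0 b0 c0 a1 b1 c1 Eb Fb Sb = x \<and> bmss_S0 a0 b0 c0 a1 b1 c1 Eb Fb Sb = hfun d g l Eb Fb x"
proof -
  have p: "d > 0" "g > 0" "l > 0" using params_pos[OF pos(1-6)] dd gg ll by auto
  note conv = bmss_conv[OF pos(7,8) p dd gg ll x]
  have uniq: "S1 = x \<and> S0 = hfun d g l Eb Fb x"
    if "ptm_BMSS a0 b0 c0 a1 b1 c1 Eb Fb Sb E S0 S1 F Y0 Y1" for E S0 S1 F Y0 Y1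
  proof -
    note c = bmss_char[OF pos(7,8) p dd gg ll that]
    then have "S1 = x" using ginj[OF p pos(7,8), of S1 x] x by auto
    then show ?thesis using c by auto
  qed
  have "bmss_S1 a0 b0 c0 a1 b1 c1 Eb Fb Sb = x"
    unfolding bmss_S1_def
    by (rule the_equality) (use conv uniq in blast)+
  moreover have "bmss_S0 a0 b0 c0 a1 b1 c1 Eb Fb Sb = hfun d g l Eb Fb x"
    unfolding bmss_S0_def
    by (rule the_equality) (use conv uniq in blast)+
  ultimately show ?thesis by simp
qed

theorem mainTheorem12:
  fixes a0 b0 c0 a1 b1 c1 Eb Fb :: real
  assumes "a0 > 0" "b0 > 0" "c0 > 0" "a1 > 0" "b1 > 0" "c1 > 0"
    and "Eb > 0" "Fb > 0"
  defines "T \<equiv> c1 * Fb - c0 * Eb"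
    and "\<Delta> \<equiv> ptm_gamma c0 a1 b1 c1 * Fb - ptm_delta a1 b1 c1 * Eb"
    and "s1 \<equiv> bmss_S1 a0 b0 c0 a1 b1 c1 Eb Fb"
    and "s0 \<equiv> bmss_S0 a0 b0 c0 a1 b1 c1 Eb Fb"
  shows "\<Delta> = (ptm_delta a1 b1 c1 / c0) * T
    \<and> strict_mono_on {0<..} s1 \<and> strict_mono_on {0<..} s0
    \<and> (T < 0 \<longrightarrow> filterlim s1 at_top at_top
          \<and> - ptm_lambda a0 b0 c0 a1 b1 c1 * Fb / \<Delta> > 0
          \<and> (s0 \<longlongrightarrow> - ptm_lambda a0 b0 c0 a1 b1 c1 * Fb / \<Delta>) at_top)
    \<and> (T > 0 \<longrightarrow> (s1 \<longlongrightarrow> Eb / \<Delta>) at_top \<and> filterlim s0 at_top at_top)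
    \<and> (T = 0 \<longrightarrow> filterlim s1 at_top at_top \<and> filterlim s0 at_top at_top)"
proof -
  note pos = assms(1-8)
  define d where "d = ptm_delta a1 b1 c1"
  define g where "g = ptm_gamma c0 a1 b1 c1"
  define l where "l = ptm_lambda a0 b0 c0 a1 b1 c1"
  have p: "d > 0" "g > 0" "l > 0" using params_pos[OF pos(1-6)] d_def g_def l_def by auto
  have Eb: "Eb > 0" and Fb: "Fb > 0" using pos by auto
  have Dd: "\<Delta> = g*Fb - d*Eb" unfolding \<Delta>_def d_def g_def ..
  have DT: "\<Delta> = (d / c0) * T"
    unfolding Dd T_def g_def d_def ptm_gamma_def using pos(3) by (simp add: field_simps)
  have K: "0 \<le> s1 S \<and> \<Delta>*s1 S < Eb \<and> gfun d g l Eb Fb (s1 S) = S \<and> s0 S = hfun d g l Eb Fb (s1 S)"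
    if S: "S > 0" for S
  proof -
    obtain x where x: "0 \<le> x" "(g*Fb - d*Eb)*x < Eb" "gfun d g l Eb Fb x = S"
      using gexists[OF p Eb Fb S] by blast
    have "s1 S = x \<and> s0 S = hfun d g l Eb Fb x"
      using bmss_vals[OF pos d_def g_def l_def x S] unfolding s1_def s0_def by simp
    then show ?thesis using x Dd by simp
  qed
  have gm: "gfun d g l Eb Fb x < gfun d g l Eb Fb y" if "0 \<le> x" "x < y" "\<Delta>*y < Eb" for x y
    using gmono[OF p Eb Fb, of x y] that Dd by simp
  have hm: "hfun d g l Eb Fb x < hfun d g l Eb Fb y" if "0 \<le> x" "x < y" "\<Delta>*y < Eb" for x y
    using hmono[OF p Eb Fb, of x y] that Dd by simp
  have s1m: "s1 S < s1 S'" if "0 < S" "S < S'" for S S'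
  proof (rule ccontr)
    assume "\<not> s1 S < s1 S'"
    then consider "s1 S' = s1 S" | "s1 S' < s1 S" by linarith
    then show False
    proof cases
      case 1 then show ?thesis using K[of S] K[of S'] that by auto
    next
      case 2 then show ?thesis using gm[of "s1 S'" "s1 S"] K[of S] K[of S'] that by auto
    qed
  qed
  have mono1: "strict_mono_on {0<..} s1"
    by (rule strict_mono_onI) (use s1m in auto)
  have mono0: "strict_mono_on {0<..} s0"
  proof (rule strict_mono_onI)
    fix r s :: real assume "r \<in> {0<..}" "s \<in> {0<..}" "r < s"
    then show "s0 r < s0 s" using hm[of "s1 r" "s1 s"] s1m[of r s] K[of r] K[of s] by auto
  qed
  have ev: "eventually (\<lambda>S. y < s1 S) at_top" if "0 \<le> y" "\<Delta>*y < Eb" for y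
  proof -
    have "eventually (\<lambda>S. max (gfun d g l Eb Fb y) 0 < S) at_top" by (rule eventually_gt_at_top)
    then show ?thesis
    proof (rule eventually_mono)
      fix S assume S: "max (gfun d g l Eb Fb y) 0 < S"
      show "y < s1 S"
      proof (rule ccontr)
        assume "\<not> y < s1 S"
        then have "s1 S = y \<or> s1 S < y" by linarith
        then have "gfun d g l Eb Fb (s1 S) \<le> gfun d g l Eb Fb y"
          using gm[of "s1 S" y] K[of S] S that by auto
        then show False using K[of S] S by auto
      qed
    qed
  qed
  have top1: "filterlim s1 at_top at_top" if "\<Delta> \<le> 0"
  proof (unfold filterlim_at_top, intro allI)
    fix Z :: real
    have "\<Delta> * max Z 0 \<le> 0" using that by (simp add: mult_nonpos_nonneg)
    then have "eventually (\<lambda>S. max Z 0 < s1 S) at_top" by (intro ev) (simp, use Eb in linarith)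
    then show "eventually (\<lambda>S. Z \<le> s1 S) at_top" by eventually_elim auto
  qed
  have sgn: "(T < 0 \<longleftrightarrow> \<Delta> < 0) \<and> (T > 0 \<longleftrightarrow> \<Delta> > 0) \<and> (T = 0 \<longleftrightarrow> \<Delta> = 0)"
  proof -
    obtain k where k: "k > 0" "\<Delta> = k*T" using DT p pos(3) by (metis divide_pos_pos)
    show ?thesis unfolding k(2) using k(1) by (auto simp: mult_less_0_iff zero_less_mult_iff)
  qed
  have case1: "T < 0 \<longrightarrow> filterlim s1 at_top at_top
          \<and> - l * Fb / \<Delta> > 0 \<and> (s0 \<longlongrightarrow> - l * Fb / \<Delta>) at_top"
  proof
    assume "T < 0"
    then have D: "\<Delta> < 0" using sgn by simp
    have f1: "filterlim s1 at_top at_top" using top1 D by simp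
    have pl: "- l * Fb / \<Delta> > 0" using D p Fb by (simp add: divide_pos_neg mult_neg_pos)
    have hl: "((\<lambda>x. hfun d g l Eb Fb x) \<longlongrightarrow> - l * Fb / \<Delta>) at_top"
    proof -
      have "((\<lambda>x. l*Fb / (Eb * inverse x - \<Delta>)) \<longlongrightarrow> l*Fb / (Eb * 0 - \<Delta>)) at_top"
        by (intro tendsto_intros tendsto_inverse_0_at_top filterlim_ident) (use D in auto)
      moreover have "eventually (\<lambda>x. l*Fb / (Eb * inverse x - \<Delta>) = hfun d g l Eb Fb x) at_top"
        using eventually_gt_at_top[of 0]
      proof eventually_elim
        case (elim x)
        then show ?case unfolding hfun_def Dd[symmetric] by (simp add: field_simps)
      qed
      ultimately show ?thesis by (simp add: tendsto_cong)
    qed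
    have "((\<lambda>S. hfun d g l Eb Fb (s1 S)) \<longlongrightarrow> - l * Fb / \<Delta>) at_top"
      using filterlim_compose[OF hl f1] .
    moreover have "eventually (\<lambda>S. hfun d g l Eb Fb (s1 S) = s0 S) at_top"
      using eventually_gt_at_top[of 0] by eventually_elim (use K in auto)
    ultimately have "(s0 \<longlongrightarrow> - l * Fb / \<Delta>) at_top" by (simp add: tendsto_cong)
    then show "filterlim s1 at_top at_top \<and> - l * Fb / \<Delta> > 0 \<and> (s0 \<longlongrightarrow> - l * Fb / \<Delta>) at_top"
      using f1 pl by simp
  qed
  have case2: "T > 0 \<longrightarrow> (s1 \<longlongrightarrow> Eb / \<Delta>) at_top \<and> filterlim s0 at_top at_top"
  proof
    assume "T > 0"
    then have D: "\<Delta> > 0" using sgn by simp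
    have "(s1 \<longlongrightarrow> Eb / \<Delta>) at_top"
    proof (rule order_tendstoI)
      fix a assume a: "a < Eb / \<Delta>"
      have "\<Delta> * max a 0 < Eb"
      proof (cases "a \<le> 0")
        case True then show ?thesis using Eb by simp
      next
        case False
        have "\<Delta> * a < Eb" using a D by (simp add: field_simps)
        then show ?thesis using False D by simp
      qed
      then have "eventually (\<lambda>S. max a 0 < s1 S) at_top" by (intro ev) (simp, assumption)
      then show "eventually (\<lambda>S. a < s1 S) at_top" by eventually_elim auto
    next
      fix a assume a: "Eb / \<Delta> < a"
      show "eventually (\<lambda>S. s1 S < a) at_top"
        using eventually_gt_at_top[of 0]
      proof eventually_elim
        case (elim S)
        then have "\<Delta> * s1 S < Eb" using K by auto
        then have "s1 S < Eb / \<Delta>" using D by (simp add: field_simps)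
        then show ?case using a by simp
      qed
    qed
    moreover have "filterlim s0 at_top at_top"
    proof (unfold filterlim_at_top, intro allI)
      fix Z :: real
      show "eventually (\<lambda>S. Z \<le> s0 S) at_top"
        using eventually_ge_at_top[of "max 1 (Z + Eb/\<Delta> + (g+d)*Fb/d)"]
      proof eventually_elim
        case (elim S)
        then have S: "S > 0" by simp
        note k = K[OF S]
        have "s1 S < Eb/\<Delta>" using k D by (simp add: field_simps)
        moreover have "(g+d)*Fb*s1 S/(1+d*s1 S) \<le> (g+d)*Fb/d" using gbound[OF p Eb Fb] k by simp
        moreover have "S = s0 S + s1 S + (g+d)*Fb*s1 S/(1+d*s1 S)" using k unfolding gfun_def by auto
        ultimately show ?case using elim by linarith
      qed
    qed
    ultimately show "(s1 \<longlongrightarrow> Eb / \<Delta>) at_top \<and> filterlim s0 at_top at_top" by simp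
  qed
  have case3: "T = 0 \<longrightarrow> filterlim s1 at_top at_top \<and> filterlim s0 at_top at_top"
  proof
    assume "T = 0"
    then have D: "\<Delta> = 0" using sgn by simp
    have "filterlim s0 at_top at_top"
    proof (unfold filterlim_at_top, intro allI)
      fix Z :: real
      have "eventually (\<lambda>S. max (Z*Eb/(l*Fb)) 0 < s1 S) at_top" by (intro ev) (simp, use D Eb in simp)
      then show "eventually (\<lambda>S. Z \<le> s0 S) at_top"
        using eventually_gt_at_top[of 0]
      proof eventually_elim
        case (elim S)
        have "s0 S = l*Fb*s1 S/Eb" using K[OF elim(2)] D unfolding hfun_def Dd[symmetric] by simp
        moreover have "Z*Eb/(l*Fb) < s1 S" using elim by simp
        then have "Z*Eb < s1 S * (l*Fb)" using p Fb by (simp add: field_simps)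
        ultimately have "Eb*Z < Eb*s0 S" using Eb by (simp add: field_simps)
        then show ?case using Eb by simp
      qed
    qed
    then show "filterlim s1 at_top at_top \<and> filterlim s0 at_top at_top" using top1 D by simp
  qed
  show ?thesis using DT mono1 mono0 case1 case2 case3 unfolding l_def d_def by blast
qed

end
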